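(* Let $V\in C^\infty(\mathbb{R}^n)$ and, for $x\in\mathbb{R}^n$, let $Q(x):=\begin{pmatrix}0&I\\-\frac{\partial^2V}{\partial x^2}(x)&\nu I\end{pmatrix}\in\mathbb{R}^{2n\times2n}$. 1) For any fixed $x\in\mathbb{R}^n$, $Q(x)$ is positive stable (all its eigenvalues have positive real part) if and only if $\frac{\partial^2V}{\partial x^2}(x)$ is positive definite. 2) Let $\frac{\partial^2V}{\partial x^2}(x)$ be positive definite for some $x\in\mathbb{R}^n$. Then: (a) if $\alpha_0>\frac{\nu^2}4$, then $\mu=\frac\nu2$ and there exists a symmetric positive definite matrix $P(x)$ such that $Q(x)P(x)+P(x)Q^T(x)=2\mu P(x)$; (b) if $0<\alpha_0<\frac{\nu^2}4$, then $\mu=\frac{\nu-\sqrt{\nu^2-4\alpha_0}}2$ and there exists a symmetric positive definite matrix $P(x)$ such that $Q(x)P(x)+P(x)Q^T(x)\ge2\mu P(x)$; (c) if $\alpha_0=\frac{\nu^2}4$, then $\mu=\frac\nu2$ and for any $\varepsilon\in(0,\nu)$ there exists a symmetric positive definite matrix $P(x,\varepsilon)$ such that $Q(x)P(x,\varepsilon)+P(x,\varepsilon)Q^T(x)\ge(2\mu-\varepsilon)P(x,\varepsilon)$.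
   Context: $\nu>0$ is a constant and $I$ the $n\times n$ identity. $\alpha(x)$ is the smallest eigenvalue of the Hessian $\frac{\partial^2V}{\partial x^2}(x)$, $\alpha_0:=\inf_{x\in\mathbb{R}^n}\alpha(x)$, and $\mu:=\inf_{x\in\mathbb{R}^n}\min\{\mathrm{Re}(\beta):\beta\text{ an eigenvalue of }Q(x)\}$. For symmetric matrices, $A\ge B$ means $A-B$ is positive semi-definite. *)

theory Defs
  imports "HOL-Analysis.Analysis"
begin

definition partial_deriv :: "'n::finite \<Rightarrow> (real^'n \<Rightarrow> real) \<Rightarrow> real^'n \<Rightarrow> real" where
  "partial_deriv i f x = deriv (\<lambda>t. f (x + t *\<^sub>R axis i 1)) 0"

text \<open>iterated partial derivatives, indices applied from the end of the list\<close>
fun iter_partial :: "'n::finite list \<Rightarrow> (real^'n \<Rightarrow> real) \<Rightarrow> real^'n \<Rightarrow> real" where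
  "iter_partial [] f = f"
| "iter_partial (i # is) f = partial_deriv i (iter_partial is f)"

text \<open>C-infinity: all iterated partial derivatives of all orders exist and are
  (Frechet) differentiable, hence continuous, everywhere\<close>
definition smooth :: "(real^'n::finite \<Rightarrow> real) \<Rightarrow> bool" where
  "smooth f \<longleftrightarrow> (\<forall>is x. iter_partial is f differentiable (at x))"

definition hessian :: "(real^'n::finite \<Rightarrow> real) \<Rightarrow> real^'n \<Rightarrow> real^'n^'n" where
  "hessian V x = (\<chi> i j. partial_deriv j (partial_deriv i V) x)"

definition Qmat :: "real \<Rightarrow> (real^'n::finite \<Rightarrow> real) \<Rightarrow> real^'n \<Rightarrow> real^('n + 'n)^('n + 'n)" where
  "Qmat \<nu> V x = (\<chi> a b. case (a, b) of
      (Inl i, Inl j) \<Rightarrow> 0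
    | (Inl i, Inr j) \<Rightarrow> (if i = j then 1 else 0)
    | (Inr i, Inl j) \<Rightarrow> - (hessian V x $ i $ j)
    | (Inr i, Inr j) \<Rightarrow> (if i = j then \<nu> else 0))"

definition real_eigenvalue :: "real^'n^'n \<Rightarrow> real \<Rightarrow> bool" where
  "real_eigenvalue A a \<longleftrightarrow> (\<exists>v. v \<noteq> 0 \<and> A *v v = a *\<^sub>R v)"

definition eigenvalue :: "real^'m^'m \<Rightarrow> complex \<Rightarrow> bool" where
  "eigenvalue A \<beta> \<longleftrightarrow>
     (\<exists>v::complex^'m. v \<noteq> 0 \<and> (\<chi> i j. complex_of_real (A $ i $ j)) *v v = \<beta> *s v)"

definition positive_stable :: "real^'m^'m \<Rightarrow> bool" where
  "positive_stable A \<longleftrightarrow> (\<forall>\<beta>. eigenvalue A \<beta> \<longrightarrow> Re \<beta> > 0)"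

definition pos_def :: "real^'m^'m \<Rightarrow> bool" where
  "pos_def A \<longleftrightarrow> (\<forall>v. v \<noteq> 0 \<longrightarrow> v \<bullet> (A *v v) > 0)"

definition sym_pos_def :: "real^'m^'m \<Rightarrow> bool" where
  "sym_pos_def A \<longleftrightarrow> transpose A = A \<and> pos_def A"

definition loewner_ge :: "real^'m^'m \<Rightarrow> real^'m^'m \<Rightarrow> bool" where
  "loewner_ge A B \<longleftrightarrow> (\<forall>v. v \<bullet> ((A - B) *v v) \<ge> 0)"

definition alpha :: "(real^'n::finite \<Rightarrow> real) \<Rightarrow> real^'n \<Rightarrow> real" where
  "alpha V x = Min {a. real_eigenvalue (hessian V x) a}"

text \<open>alpha_0 and mu as infima in the extended reals (they may be -infinity in general)\<close>
definition alpha0 :: "(real^'n::finite \<Rightarrow> real) \<Rightarrow> ereal" where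
  "alpha0 V = (INF x. ereal (alpha V x))"

definition mu :: "real \<Rightarrow> (real^'n::finite \<Rightarrow> real) \<Rightarrow> ereal" where
  "mu \<nu> V = (INF x. INF \<beta> \<in> {\<beta>. eigenvalue (Qmat \<nu> V x) \<beta>}. ereal (Re \<beta>))"

end

theory Submission
  imports Defs
begin

definition blk :: "'a::comm_ring_1^'n^'n \<Rightarrow> 'a^'n^'n \<Rightarrow> 'a^'n^'n \<Rightarrow> 'a^'n^'n \<Rightarrow> 'a^('n+'n)^('n+'n)" where
  "blk A B C D = (\<chi> a b. case a of Inl i \<Rightarrow> (case b of Inl j \<Rightarrow> A$i$j | Inr j \<Rightarrow> B$i$j)
                                   | Inr i \<Rightarrow> (case b of Inl j \<Rightarrow> C$i$j | Inr j \<Rightarrow> D$i$j))"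

definition up :: "'a^('n+'n) \<Rightarrow> 'a^'n" where "up v = (\<chi> i. v $ Inl i)"
definition lo :: "'a^('n+'n) \<Rightarrow> 'a^'n" where "lo v = (\<chi> i. v $ Inr i)"

lemma sum_UNIV_plus:
  "(\<Sum>k\<in>(UNIV::('a::finite+'b::finite) set). f k) = (\<Sum>i\<in>UNIV. f (Inl i)) + (\<Sum>j\<in>UNIV. f (Inr j))"
  by (simp add: UNIV_Plus_UNIV[symmetric] sum.Plus del: UNIV_Plus_UNIV) 

lemma all_plus: "(\<forall>k::'a+'b. P k) \<longleftrightarrow> (\<forall>i. P (Inl i)) \<and> (\<forall>j. P (Inr j))"
  by (metis sum.exhaust)

lemma up_blk: "up (blk A B C D *v v) = A *v up v + B *v lo v"
  by (simp add: up_def lo_def blk_def vec_eq_iff matrix_vector_mult_def sum_UNIV_plus)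
lemma lo_blk: "lo (blk A B C D *v v) = C *v up v + D *v lo v"
  by (simp add: up_def lo_def blk_def vec_eq_iff matrix_vector_mult_def sum_UNIV_plus)

lemma vec_eq_blocks: "v = w \<longleftrightarrow> up v = up w \<and> lo v = lo w"
  by (auto simp: vec_eq_iff up_def lo_def all_plus)

lemma inner_blocks: "(v::real^('n::finite+'n)) \<bullet> w = up v \<bullet> up w + lo v \<bullet> lo w"
  by (simp add: inner_vec_def sum_UNIV_plus up_def lo_def)

lemma transpose_blk: "transpose (blk A B C D) = blk (transpose A) (transpose C) (transpose B) (transpose D)"
  by (auto simp: blk_def transpose_def vec_eq_iff all_plus)

lemma mat_mult: "mat k *v v = k *s v"
  by (simp add: vec_eq_iff matrix_vector_mult_def mat_def if_distrib[of "\<lambda>f. f _"] if_distrib[of "\<lambda>x. x * _"] cong: if_cong)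

lemma up_add[simp]: "up (v + w) = up v + up w" and lo_add[simp]: "lo (v + w) = lo v + lo w"
  and up_diff[simp]: "up (v - w) = up v - up w" and lo_diff[simp]: "lo (v - w) = lo v - lo w"
  and up_scaleR[simp]: "up (c *\<^sub>R x) = c *\<^sub>R up x" and lo_scaleR[simp]: "lo (c *\<^sub>R x) = c *\<^sub>R lo x"
  by (auto simp: vec_eq_iff up_def lo_def)

lemma up_zero[simp]: "up 0 = 0" and lo_zero[simp]: "lo 0 = 0" by (auto simp: vec_eq_iff up_def lo_def)

lemma Qmat_blk: "Qmat \<nu> V x = blk 0 (mat 1) (- hessian V x) (mat \<nu>)"
  by (auto simp: Qmat_def blk_def vec_eq_iff all_plus mat_def)

lemma sym_dot:
  fixes H :: "real^'n^'n"
  assumes "transpose H = H" shows "(H *v x) \<bullet> y = x \<bullet> (H *v y)"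
proof -
  have "x v* H = H *v x" using vector_transpose_matrix[of x H] assms by simp
  then show ?thesis using dot_lmul_matrix[of x H y] by simp
qed

lemma quad_expand:
  fixes H :: "real^'n^'n"
  assumes "transpose H = H"
  shows "(v + t *\<^sub>R d) \<bullet> (H *v (v + t *\<^sub>R d)) = v \<bullet> (H *v v) + 2 * t * (d \<bullet> (H *v v)) + t^2 * (d \<bullet> (H *v d))"
proof -
  have "v \<bullet> (H *v d) = d \<bullet> (H *v v)" using sym_dot[OF assms, of v d] by (simp add: inner_commute)
  then show ?thesis
    by (simp add: matrix_vector_right_distrib matrix_vector_mult_scaleR inner_add_left inner_add_right
        inner_commute power2_eq_square algebra_simps)
qed

lemma rayleigh:
  fixes H :: "real^'n^'n"
  assumes sym: "transpose H = H"
  shows "\<exists>v m. v \<noteq> 0 \<and> H *v v = m *\<^sub>R v \<and> (\<forall>w. m * (w \<bullet> w) \<le> w \<bullet> (H *v w))"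
proof -
  let ?f = "\<lambda>v. v \<bullet> (H *v v)"
  have ne: "sphere (0::real^'n) 1 \<noteq> {}"
  proof -
    have "axis undefined 1 \<in> sphere (0::real^'n) 1" by simp
    then show ?thesis by blast
  qed
  have cont: "continuous_on (sphere 0 1) ?f"
    by (intro continuous_on_inner continuous_on_id matrix_vector_mult_linear_continuous_on)
  obtain v0 where v0: "v0 \<in> sphere 0 1" and mn: "\<forall>y\<in>sphere 0 1. ?f v0 \<le> ?f y"
    using continuous_attains_inf[OF compact_sphere ne cont] by blast
  define m where "m = ?f v0"
  have n1: "v0 \<bullet> v0 = 1" using v0 by (simp add: dot_square_norm)
  have q: "m * (w \<bullet> w) \<le> ?f w" for w
  proof (cases "w = 0")
    case True then show ?thesis by simp
  next
    case False
    let ?w = "(1 / norm w) *\<^sub>R w"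
    have "?w \<in> sphere 0 1" using False by simp
    then have "m \<le> ?f ?w" using mn m_def by blast
    also have "?f ?w = ?f w / (norm w)^2"
      by (simp add: matrix_vector_mult_scaleR power2_eq_square)
    finally have "m * (norm w)^2 \<le> ?f w" using False by (simp add: field_simps)
    then show ?thesis by (simp add: dot_square_norm)
  qed
  define d where "d = H *v v0 - m *\<^sub>R v0"
  have dd: "d \<bullet> d = d \<bullet> (H *v v0) - m * (d \<bullet> v0)"
    by (simp add: d_def inner_diff_right)
  define D where "D = d \<bullet> d"
  define E where "E = d \<bullet> (H *v d) - m * (d \<bullet> d)"
  have E0: "E \<ge> 0" using q[of d] by (simp add: E_def)
  have key: "0 \<le> 2 * t * D + t^2 * E" for t
  proof -
    have h: "m * ((v0 + t *\<^sub>R d) \<bullet> (v0 + t *\<^sub>R d)) \<le> ?f (v0 + t *\<^sub>R d)" by (rule q)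
    have e1: "(v0 + t *\<^sub>R d) \<bullet> (v0 + t *\<^sub>R d) = 1 + 2 * t * (d \<bullet> v0) + t^2 * D"
      using n1 unfolding D_def by (simp add: inner_add_left inner_add_right inner_commute power2_eq_square algebra_simps)
    have e2: "?f (v0 + t *\<^sub>R d) = m + 2 * t * (d \<bullet> (H *v v0)) + t^2 * (d \<bullet> (H *v d))"
      using quad_expand[OF sym, of v0 t d] unfolding m_def by simp
    have dd': "D = d \<bullet> (H *v v0) - m * (d \<bullet> v0)" using dd unfolding D_def .
    have E': "E = d \<bullet> (H *v d) - m * D" unfolding E_def D_def ..
    have gen: "\<And>a b c. b = D + m * a \<Longrightarrow> c = E + m * D \<Longrightarrow> m * (1 + 2 * t * a + t^2 * D) \<le> m + 2 * t * b + t^2 * c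
       \<Longrightarrow> 0 \<le> 2 * t * D + t^2 * E"
      by (simp add: algebra_simps power2_eq_square)
    show ?thesis using gen[of "d \<bullet> (H *v v0)" "d \<bullet> v0" "d \<bullet> (H *v d)"] dd' E' h e1 e2 by simp
  qed
  have "D = 0"
  proof (rule ccontr)
    assume "D \<noteq> 0"
    then have Dp: "D > 0" by (simp add: D_def)
    have ne: "E + 1 > 0" using E0 by linarith
    define t where "t = - D / (E + 1)"
    have ht: "t * (E + 1) = - D" using ne by (simp add: t_def)
    have k: "0 \<le> 2 * t * D + t^2 * E" by (rule key)
    have "(E+1)^2 * (2 * t * D + t^2 * E) = 2 * D * (E+1) * (t * (E+1)) + (t * (E+1))^2 * E"
      by (simp add: algebra_simps power2_eq_square)
    also have "\<dots> = D^2 * (- E - 2)" using ht by (simp add: algebra_simps power2_eq_square)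
    finally have eq: "(E+1)^2 * (2 * t * D + t^2 * E) = D^2 * (- E - 2)" .
    have "D^2 * (- E - 2) < 0" using Dp E0 by (intro mult_pos_neg) auto
    moreover have "(E+1)^2 * (2 * t * D + t^2 * E) \<ge> 0" using k by simp
    ultimately show False using eq by linarith
  qed
  then have "d = 0" by (simp add: D_def)
  then have "H *v v0 = m *\<^sub>R v0" by (simp add: d_def)
  moreover have "v0 \<noteq> 0" using v0 by auto
  ultimately show ?thesis using q by blast
qed

lemma real_eig_ge:
  fixes H :: "real^'n^'n"
  assumes "\<forall>w. m * (w \<bullet> w) \<le> w \<bullet> (H *v w)" "H *v v = a *\<^sub>R v" "v \<noteq> 0"
  shows "m \<le> a"
proof -
  have "m * (v \<bullet> v) \<le> a * (v \<bullet> v)" using assms(1)[rule_format, of v] assms(2) by simp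
  moreover have "v \<bullet> v > 0" using assms(3) by simp
  ultimately show ?thesis by simp
qed

lemma finite_eig:
  fixes H :: "real^'n^'n"
  assumes sym: "transpose H = H"
  shows "finite {a. real_eigenvalue H a}"
proof -
  define S where "S = {a. real_eigenvalue H a}"
  define f where "f a = (SOME v. v \<noteq> 0 \<and> H *v v = a *\<^sub>R v)" for a
  have f: "f a \<noteq> 0 \<and> H *v f a = a *\<^sub>R f a" if "a \<in> S" for a
  proof -
    have "real_eigenvalue H a" using that by (simp add: S_def)
    then obtain v where "v \<noteq> 0 \<and> H *v v = a *\<^sub>R v" unfolding real_eigenvalue_def by (elim exE)
    then show ?thesis unfolding f_def by (rule someI)
  qed
  have inj: "inj_on f S"
  proof (rule inj_onI)
    fix a b assume a: "a \<in> S" and b: "b \<in> S" and e: "f a = f b"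
    have "a *\<^sub>R f a = H *v f a" using f[OF a] by metis
    also have "\<dots> = H *v f b" using e by metis
    also have "\<dots> = b *\<^sub>R f b" using f[OF b] by metis
    also have "\<dots> = b *\<^sub>R f a" using e by metis
    finally have "a *\<^sub>R f a = b *\<^sub>R f a" .
    then show "a = b" using f[OF a] scaleR_cancel_right by blast
  qed
  have orth: "pairwise orthogonal (f ` S)"
    unfolding pairwise_def orthogonal_def
  proof (intro ballI impI)
    fix x y assume x: "x \<in> f ` S" and y: "y \<in> f ` S" and ne: "x \<noteq> y"
    obtain a where a: "a \<in> S" "x = f a" using x by blast
    obtain b where b: "b \<in> S" "y = f b" using y by blast
    have "a \<noteq> b" using ne a b by blast
    have "a * (x \<bullet> y) = (H *v x) \<bullet> y" using f[OF a(1)] a(2) by simp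
    also have "\<dots> = x \<bullet> (H *v y)" by (rule sym_dot[OF sym])
    also have "\<dots> = b * (x \<bullet> y)" using f[OF b(1)] b(2) by simp
    finally show "x \<bullet> y = 0" using \<open>a \<noteq> b\<close> by simp
  qed
  have "0 \<notin> f ` S"
  proof
    assume "0 \<in> f ` S"
    then obtain a where "a \<in> S" "0 = f a" by (auto simp del: mem_Collect_eq)
    then show False using f by metis
  qed
  then have "independent (f ` S)" by (rule pairwise_orthogonal_independent[OF orth])
  then have "finite (f ` S)" by (rule independent_imp_finite)
  then have "finite S" by (rule finite_imageD[OF _ inj])
  then show ?thesis by (simp add: S_def)
qed

lemma min_eig:
  fixes H :: "real^'n^'n"
  assumes sym: "transpose H = H"
  shows "real_eigenvalue H (Min {a. real_eigenvalue H a}) \<and>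
         (\<forall>w. Min {a. real_eigenvalue H a} * (w \<bullet> w) \<le> w \<bullet> (H *v w))"
proof -
  obtain v m where v: "v \<noteq> 0" "H *v v = m *\<^sub>R v" and q: "\<forall>w. m * (w \<bullet> w) \<le> w \<bullet> (H *v w)"
    using rayleigh[OF sym] by blast
  have "Min {a. real_eigenvalue H a} = m"
  proof (rule Min_eqI)
    show "finite {a. real_eigenvalue H a}" by (rule finite_eig[OF sym])
    show "m \<le> y" if hy: "y \<in> {a. real_eigenvalue H a}" for y
    proof -
      obtain u where "u \<noteq> 0" "H *v u = y *\<^sub>R u" using hy unfolding real_eigenvalue_def mem_Collect_eq by (elim exE conjE)
      then show ?thesis using real_eig_ge[OF q] by metis
    qed
    show "m \<in> {a. real_eigenvalue H a}" using v by (auto simp: real_eigenvalue_def)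
  qed
  moreover have "real_eigenvalue H m" using v unfolding real_eigenvalue_def by blast
  ultimately show ?thesis using q by simp
qed

lemma deriv_line:
  fixes g :: "'a::real_normed_vector \<Rightarrow> real"
  assumes "g differentiable (at (y + t *\<^sub>R a))"
  shows "((\<lambda>s. g (y + s *\<^sub>R a)) has_real_derivative frechet_derivative g (at (y + t *\<^sub>R a)) a) (at t)"
proof -
  define D where "D = frechet_derivative g (at (y + t *\<^sub>R a))"
  have g': "(g has_derivative D) (at (y + t *\<^sub>R a))" using assms frechet_derivative_works D_def by blast
  have l: "((\<lambda>s. y + s *\<^sub>R a) has_derivative (\<lambda>s. s *\<^sub>R a)) (at t)"
    by (auto intro!: derivative_eq_intros)
  have c: "((\<lambda>s. g (y + s *\<^sub>R a)) has_derivative (\<lambda>s. D (s *\<^sub>R a))) (at t)"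
    using has_derivative_compose[OF l g'] by (simp add: o_def)
  have lin: "linear D" using has_derivative_linear[OF g'] .
  have eq: "(\<lambda>s. D (s *\<^sub>R a)) = (*) (D a)"
    using linear_cmul[OF lin] by (auto simp: fun_eq_iff mult.commute)
  have "((\<lambda>s. g (y + s *\<^sub>R a)) has_derivative (*) (D a)) (at t)" using c unfolding eq .
  then show ?thesis unfolding has_field_derivative_def D_def .
qed

lemma pd_frechet:
  assumes "g differentiable (at z)"
  shows "partial_deriv i g z = frechet_derivative g (at z) (axis i 1)"
proof -
  have "((\<lambda>s. g (z + s *\<^sub>R axis i 1)) has_real_derivative frechet_derivative g (at z) (axis i 1)) (at 0)"
    using deriv_line[of g z 0 "axis i 1"] assms by simp
  then show ?thesis unfolding partial_deriv_def by (rule DERIV_imp_deriv)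
qed

lemma line_deriv:
  assumes "\<forall>z. g differentiable (at z)"
  shows "((\<lambda>s. g (y + s *\<^sub>R axis i 1)) has_real_derivative partial_deriv i g (y + t *\<^sub>R axis i 1)) (at t)"
  using deriv_line[of g y t "axis i 1"] pd_frechet[of g "y + t *\<^sub>R axis i 1" i] assms by simp

lemma schwarz_step:
  fixes f :: "real^'n \<Rightarrow> real"
  assumes d0: "\<forall>z. f differentiable (at z)" and d1: "\<forall>z. partial_deriv i f differentiable (at z)"
    and h: "h > 0"
  shows "\<exists>\<xi> \<eta>. 0 < \<xi> \<and> \<xi> < h \<and> 0 < \<eta> \<and> \<eta> < h \<and>
     f (x + h *\<^sub>R axis i 1 + h *\<^sub>R axis j 1) - f (x + h *\<^sub>R axis i 1) - f (x + h *\<^sub>R axis j 1) + f x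
       = h^2 * partial_deriv j (partial_deriv i f) (x + \<xi> *\<^sub>R axis i 1 + \<eta> *\<^sub>R axis j 1)"
proof -
  let ?a = "axis i 1 :: real^'n" and ?b = "axis j 1 :: real^'n"
  define \<phi> where "\<phi> t = f ((x + h *\<^sub>R ?b) + t *\<^sub>R ?a) - f (x + t *\<^sub>R ?a)" for t
  have "\<And>t. 0 \<le> t \<Longrightarrow> t \<le> h \<Longrightarrow> (\<phi> has_real_derivative
      (partial_deriv i f ((x + h *\<^sub>R ?b) + t *\<^sub>R ?a) - partial_deriv i f (x + t *\<^sub>R ?a))) (at t)"
    unfolding \<phi>_def by (intro DERIV_diff line_deriv d0)
  from MVT2[OF h this] obtain \<xi> where \<xi>: "0 < \<xi>" "\<xi> < h"
    and e1: "\<phi> h - \<phi> 0 = (h - 0) * (partial_deriv i f ((x + h *\<^sub>R ?b) + \<xi> *\<^sub>R ?a) - partial_deriv i f (x + \<xi> *\<^sub>R ?a))"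
    by blast
  define \<psi> where "\<psi> s = partial_deriv i f ((x + \<xi> *\<^sub>R ?a) + s *\<^sub>R ?b)" for s
  have "\<And>s. 0 \<le> s \<Longrightarrow> s \<le> h \<Longrightarrow> (\<psi> has_real_derivative
      partial_deriv j (partial_deriv i f) ((x + \<xi> *\<^sub>R ?a) + s *\<^sub>R ?b)) (at s)"
    unfolding \<psi>_def by (intro line_deriv d1)
  from MVT2[OF h this] obtain \<eta> where \<eta>: "0 < \<eta>" "\<eta> < h"
    and e2: "\<psi> h - \<psi> 0 = (h - 0) * partial_deriv j (partial_deriv i f) ((x + \<xi> *\<^sub>R ?a) + \<eta> *\<^sub>R ?b)"
    by blast
  have "\<psi> h - \<psi> 0 = partial_deriv i f ((x + h *\<^sub>R ?b) + \<xi> *\<^sub>R ?a) - partial_deriv i f (x + \<xi> *\<^sub>R ?a)"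
    unfolding \<psi>_def by (simp add: algebra_simps)
  then have "\<phi> h - \<phi> 0 = h^2 * partial_deriv j (partial_deriv i f) ((x + \<xi> *\<^sub>R ?a) + \<eta> *\<^sub>R ?b)"
    using e1 e2 by (simp add: power2_eq_square)
  moreover have "\<phi> h - \<phi> 0 = f (x + h *\<^sub>R ?a + h *\<^sub>R ?b) - f (x + h *\<^sub>R ?a) - f (x + h *\<^sub>R ?b) + f x"
    unfolding \<phi>_def by (simp add: algebra_simps)
  ultimately show ?thesis using \<xi> \<eta> by metis
qed

lemma schwarz:
  fixes f :: "real^'n \<Rightarrow> real"
  assumes d0: "\<forall>z. f differentiable (at z)"
    and di: "\<forall>z. partial_deriv i f differentiable (at z)"
    and dj: "\<forall>z. partial_deriv j f differentiable (at z)"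
    and c1: "\<forall>z. continuous (at z) (partial_deriv j (partial_deriv i f))"
    and c2: "\<forall>z. continuous (at z) (partial_deriv i (partial_deriv j f))"
  shows "partial_deriv j (partial_deriv i f) x = partial_deriv i (partial_deriv j f) x"
proof (rule ccontr)
  let ?A = "partial_deriv j (partial_deriv i f)" and ?B = "partial_deriv i (partial_deriv j f)"
  let ?a = "axis i 1 :: real^'n" and ?b = "axis j 1 :: real^'n"
  assume ne: "?A x \<noteq> ?B x"
  define e where "e = \<bar>?A x - ?B x\<bar> / 2"
  have e: "e > 0" using ne by (simp add: e_def)
  obtain d1 where d1: "d1 > 0" "\<forall>y. dist y x < d1 \<longrightarrow> dist (?A y) (?A x) < e"
    using c1 e unfolding continuous_at_eps_delta by blast
  obtain d2 where d2: "d2 > 0" "\<forall>y. dist y x < d2 \<longrightarrow> dist (?B y) (?B x) < e"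
    using c2 e unfolding continuous_at_eps_delta by blast
  define h where "h = min d1 d2 / 4"
  have h: "h > 0" using d1 d2 by (simp add: h_def)
  obtain \<xi> \<eta> where xe: "0 < \<xi>" "\<xi> < h" "0 < \<eta>" "\<eta> < h"
    and E1: "f (x + h *\<^sub>R ?a + h *\<^sub>R ?b) - f (x + h *\<^sub>R ?a) - f (x + h *\<^sub>R ?b) + f x
       = h^2 * ?A (x + \<xi> *\<^sub>R ?a + \<eta> *\<^sub>R ?b)"
    using schwarz_step[OF d0 di h, of x j] by blast
  obtain \<xi>' \<eta>' where xe': "0 < \<xi>'" "\<xi>' < h" "0 < \<eta>'" "\<eta>' < h"
    and E2: "f (x + h *\<^sub>R ?b + h *\<^sub>R ?a) - f (x + h *\<^sub>R ?b) - f (x + h *\<^sub>R ?a) + f x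
       = h^2 * ?B (x + \<xi>' *\<^sub>R ?b + \<eta>' *\<^sub>R ?a)"
    using schwarz_step[OF d0 dj h, of x i] by blast
  have perm: "x + h *\<^sub>R ?b + h *\<^sub>R ?a = x + h *\<^sub>R ?a + h *\<^sub>R ?b" by (simp add: algebra_simps)
  have "h^2 * ?A (x + \<xi> *\<^sub>R ?a + \<eta> *\<^sub>R ?b) = h^2 * ?B (x + \<xi>' *\<^sub>R ?b + \<eta>' *\<^sub>R ?a)"
    using E1 E2 unfolding perm by linarith
  then have eq: "?A (x + \<xi> *\<^sub>R ?a + \<eta> *\<^sub>R ?b) = ?B (x + \<xi>' *\<^sub>R ?b + \<eta>' *\<^sub>R ?a)"
    using h by simp
  have nb: "norm (s *\<^sub>R u + t *\<^sub>R w) < min d1 d2"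
    if "0 < s" "s < h" "0 < t" "t < h" "norm u = 1" "norm w = 1" for s t and u w :: "real^'n"
  proof -
    have "norm (s *\<^sub>R u + t *\<^sub>R w) \<le> norm (s *\<^sub>R u) + norm (t *\<^sub>R w)" by (rule norm_triangle_ineq)
    also have "\<dots> = s + t" using that by simp
    also have "\<dots> < min d1 d2" using that h_def d1 d2 by simp
    finally show ?thesis .
  qed
  have "dist (x + \<xi> *\<^sub>R ?a + \<eta> *\<^sub>R ?b) x < min d1 d2"
    using nb[OF xe] by (simp add: dist_norm)
  then have A1: "dist (?A (x + \<xi> *\<^sub>R ?a + \<eta> *\<^sub>R ?b)) (?A x) < e" using d1 by simp
  have "dist (x + \<xi>' *\<^sub>R ?b + \<eta>' *\<^sub>R ?a) x < min d1 d2"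
    using nb[OF xe'] by (simp add: dist_norm)
  then have B1: "dist (?B (x + \<xi>' *\<^sub>R ?b + \<eta>' *\<^sub>R ?a)) (?B x) < e" using d2 by simp
  have gen: "\<And>p q r :: real. \<bar>p - q\<bar> < \<bar>q - r\<bar> / 2 \<Longrightarrow> \<bar>p - r\<bar> < \<bar>q - r\<bar> / 2 \<Longrightarrow> False"
    by (auto simp: abs_if split: if_split_asm)
  show False using A1 B1 eq gen unfolding dist_real_def e_def by metis
qed

lemma hess_sym:
  assumes "smooth V" shows "transpose (hessian V x) = hessian V x"
proof -
  have dif: "\<And>is z. iter_partial is V differentiable (at z)" using assms unfolding smooth_def by blast
  have d0: "\<forall>z. V differentiable (at z)" using dif[of "[]"] by simp
  have d1: "\<forall>z. partial_deriv i V differentiable (at z)" for i using dif[of "[i]"] by simp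
  have c2: "\<forall>z. continuous (at z) (partial_deriv j (partial_deriv i V))" for i j
    using dif[of "[j, i]"] by (simp add: differentiable_imp_continuous_within)
  show ?thesis
    unfolding transpose_def hessian_def vec_eq_iff
    using schwarz[OF d0 d1 d1 c2 c2] by simp
qed

definition cm :: "real^'n^'m \<Rightarrow> complex^'n^'m" where "cm M = (\<chi> i j. complex_of_real (M $ i $ j))"
definition cv :: "real^'n \<Rightarrow> complex^'n" where "cv v = (\<chi> i. complex_of_real (v $ i))"

lemma cm_blk: "(\<chi> i j. complex_of_real (blk A B C D $ i $ j)) = blk (cm A) (cm B) (cm C) (cm D)"
  by (auto simp: blk_def cm_def vec_eq_iff all_plus)

lemma cm_simps: "cm 0 = 0" "cm (mat 1) = mat 1" "cm (- H) = - cm H" "cm (mat r) = mat (complex_of_real r)"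
  by (auto simp: cm_def vec_eq_iff mat_def)

lemma neg_mv: "(- A) *v x = - (A *v (x::'a::comm_ring_1^'n))"
  by (simp add: vec_eq_iff matrix_vector_mult_def sum_negf)

lemma up_smult[simp]: "up (c *s v) = c *s up v" and lo_smult[simp]: "lo (c *s v) = c *s lo v"
  and up_add'[simp]: "up (v + w) = up v + up w" and lo_add'[simp]: "lo (v + w) = lo v + lo w"
  by (auto simp: vec_eq_iff up_def lo_def)


lemma cm_mv_cv: "cm H *v cv u = cv (H *v u)"
  by (simp add: vec_eq_iff cm_def cv_def matrix_vector_mult_def)

lemma cv_scaleR: "cv (r *\<^sub>R u) = complex_of_real r *s cv u"
  by (simp add: vec_eq_iff cv_def)

lemma cv_zero_iff: "cv u = 0 \<longleftrightarrow> u = 0"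
  by (simp add: vec_eq_iff cv_def)

lemma Q_eig:
  fixes H :: "real^'n^'n"
  assumes "eigenvalue (blk 0 (mat 1) (- H) (mat \<nu>)) \<beta>"
  shows "\<exists>u. u \<noteq> 0 \<and> cm H *v u = (complex_of_real \<nu> * \<beta> - \<beta> * \<beta>) *s u"
proof -
  have "\<exists>v. v \<noteq> 0 \<and> blk 0 (mat 1) (- cm H) (mat (complex_of_real \<nu>)) *v v = \<beta> *s v"
    using assms unfolding eigenvalue_def cm_blk cm_simps of_real_1 .
  then obtain v where v: "v \<noteq> 0" and e: "blk 0 (mat 1) (- cm H) (mat (complex_of_real \<nu>)) *v v = \<beta> *s v"
    by (elim exE conjE)
  have e1: "lo v = \<beta> *s up v"
    using arg_cong[OF e, of up] by (simp add: up_blk)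
  have e2: "- (cm H *v up v) + complex_of_real \<nu> *s lo v = \<beta> *s lo v"
    using arg_cong[OF e, of lo] by (simp add: lo_blk neg_mv mat_mult)
  have u0: "up v \<noteq> 0"
  proof
    assume "up v = 0"
    then have "lo v = 0" using e1 by simp
    then show False using v \<open>up v = 0\<close> vec_eq_blocks[of v 0] by simp
  qed
  have "cm H *v up v = complex_of_real \<nu> *s lo v - \<beta> *s lo v" using e2 by (simp add: algebra_simps)
  also have "\<dots> = (complex_of_real \<nu> * \<beta> - \<beta> * \<beta>) *s up v"
    unfolding e1 by (simp add: vector_smult_assoc vector_sub_rdistrib)
  finally show ?thesis using u0 by (intro exI[of _ "up v"]) simp
qed

lemma Q_eig_back:
  fixes H :: "real^'n^'n"
  assumes u: "u \<noteq> 0" "H *v u = l *\<^sub>R u" and b: "\<beta> * \<beta> - complex_of_real \<nu> * \<beta> + complex_of_real l = 0"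
  shows "eigenvalue (blk 0 (mat 1) (- H) (mat \<nu>)) \<beta>"
proof -
  define v :: "complex^('n+'n)" where "v = (\<chi> k. case k of Inl i \<Rightarrow> cv u $ i | Inr i \<Rightarrow> \<beta> * cv u $ i)"
  have uv: "up v = cv u" "lo v = \<beta> *s cv u" by (auto simp: v_def up_def lo_def vec_eq_iff)
  have v0: "v \<noteq> 0" using uv u cv_zero_iff by (metis up_zero)
  have hc: "cm H *v cv u = complex_of_real l *s cv u" using u by (simp add: cm_mv_cv cv_scaleR)
  have "blk 0 (mat 1) (- cm H) (mat (complex_of_real \<nu>)) *v v = \<beta> *s v"
  proof -
    have "up (blk 0 (mat 1) (- cm H) (mat (complex_of_real \<nu>)) *v v) = up (\<beta> *s v)"
      by (simp add: up_blk uv)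
    moreover have "lo (blk 0 (mat 1) (- cm H) (mat (complex_of_real \<nu>)) *v v) = lo (\<beta> *s v)"
    proof -
      have bb: "\<beta> * \<beta> = complex_of_real \<nu> * \<beta> - complex_of_real l" using b by (simp add: algebra_simps)
      have "lo (blk 0 (mat 1) (- cm H) (mat (complex_of_real \<nu>)) *v v) = (complex_of_real \<nu> * \<beta> - complex_of_real l) *s cv u"
        by (simp add: lo_blk uv neg_mv mat_mult hc vector_smult_assoc vector_sub_rdistrib)
      also have "\<dots> = lo (\<beta> *s v)" by (simp add: uv vector_smult_assoc bb)
      finally show ?thesis .
    qed
    ultimately show ?thesis using vec_eq_blocks by metis
  qed
  then show ?thesis unfolding eigenvalue_def cm_blk cm_simps of_real_1 using v0 by (intro exI[of _ v]) simp
qed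

lemma cplx_eig:
  fixes H :: "real^'n^'n"
  assumes sym: "transpose H = H" and q: "\<forall>w. m * (w \<bullet> w) \<le> w \<bullet> (H *v w)"
    and u: "u \<noteq> 0" and e: "cm H *v u = lam *s u"
  shows "Im lam = 0 \<and> m \<le> Re lam"
proof -
  define a where "a = (\<chi> i. Re (u $ i))"
  define b where "b = (\<chi> i. Im (u $ i))"
  define p where "p = Re lam"
  define r where "r = Im lam"
  have ek: "(cm H *v u) $ k = lam * u $ k" for k using e by simp
  have Ha: "H *v a = p *\<^sub>R a - r *\<^sub>R b"
  proof -
    have "(H *v a) $ k = (p *\<^sub>R a - r *\<^sub>R b) $ k" for k
      using arg_cong[OF ek[of k], of Re]
      by (simp add: matrix_vector_mult_def cm_def a_def b_def p_def r_def Re_sum)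
    then show ?thesis by (simp add: vec_eq_iff)
  qed
  have Hb: "H *v b = r *\<^sub>R a + p *\<^sub>R b"
  proof -
    have "(H *v b) $ k = (r *\<^sub>R a + p *\<^sub>R b) $ k" for k
      using arg_cong[OF ek[of k], of Im]
      by (simp add: matrix_vector_mult_def cm_def a_def b_def p_def r_def Im_sum algebra_simps)
    then show ?thesis by (simp add: vec_eq_iff)
  qed
  have "(H *v a) \<bullet> b = a \<bullet> (H *v b)" by (rule sym_dot[OF sym])
  then have "p * (a \<bullet> b) - r * (b \<bullet> b) = r * (a \<bullet> a) + p * (a \<bullet> b)"
    unfolding Ha Hb by (simp add: inner_diff_left inner_diff_right inner_add_left inner_add_right inner_commute)
  then have r0: "r * (a \<bullet> a + b \<bullet> b) = 0" by (simp add: algebra_simps)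
  have ab: "a \<noteq> 0 \<or> b \<noteq> 0"
  proof (rule ccontr)
    assume "\<not> (a \<noteq> 0 \<or> b \<noteq> 0)"
    then have "\<forall>k. Re (u $ k) = 0 \<and> Im (u $ k) = 0" by (simp add: a_def b_def vec_eq_iff)
    then have "u = 0" by (simp add: vec_eq_iff complex_eq_iff)
    with u show False by simp
  qed
  then have "a \<bullet> a + b \<bullet> b > 0"
    by (metis add_nonneg_pos add_pos_nonneg inner_ge_zero inner_gt_zero_iff)
  then have "r = 0" using r0 by simp
  then have Ha': "H *v a = p *\<^sub>R a" and Hb': "H *v b = p *\<^sub>R b" using Ha Hb by simp_all
  have "m \<le> p" using ab real_eig_ge[OF q Ha'] real_eig_ge[OF q Hb'] by blast
  then show ?thesis using \<open>r = 0\<close> by (simp add: p_def r_def)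
qed

definition Pm :: "real \<Rightarrow> real \<Rightarrow> real^'n^'n \<Rightarrow> real^('n+'n)^('n+'n)" where
  "Pm \<nu> c H = blk (mat 1) (mat (\<nu>/2)) (mat (\<nu>/2)) (H + mat c)"

lemma mat_mult_real: "mat k *v (v::real^'n) = k *\<^sub>R v"
  by (simp add: mat_mult scalar_mult_eq_scaleR)

lemma up_P: "up (Pm \<nu> c H *v v) = up v + (\<nu>/2) *\<^sub>R lo v"
  by (simp add: Pm_def up_blk mat_mult_real)
lemma lo_P: "lo (Pm \<nu> c H *v v) = (\<nu>/2) *\<^sub>R up v + H *v lo v + c *\<^sub>R lo v"
  by (simp add: Pm_def lo_blk mat_mult_real matrix_vector_mult_add_rdistrib)

lemma up_Q: "up (blk 0 (mat 1) (- H) (mat \<nu>) *v (v::real^('n::finite+'n))) = lo v"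
  by (simp add: up_blk)
lemma lo_Q: "lo (blk 0 (mat 1) (- H) (mat \<nu>) *v (v::real^('n::finite+'n))) = - (H *v up v) + \<nu> *\<^sub>R lo v"
  by (simp add: lo_blk neg_mv mat_mult_real)

lemma transpose_neg': "transpose (- A) = - transpose (A::'a::ring_1^'n^'n)"
  by (simp add: transpose_def vec_eq_iff)
lemma transpose_add': "transpose (A + B) = transpose A + transpose (B::'a::ring_1^'n^'n)"
  by (simp add: transpose_def vec_eq_iff)

lemma transpose_zero': "transpose (0::'a::zero^'n^'m) = 0"
  by (simp add: transpose_def vec_eq_iff)

lemma Q_T: "transpose H = H \<Longrightarrow> transpose (blk 0 (mat 1) (- H) (mat \<nu>)) = blk 0 (- H) (mat 1) (mat (\<nu>::real))"
  by (simp add: transpose_blk transpose_neg' transpose_zero')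

lemma up_QT: "up (blk 0 (- H) (mat 1) (mat \<nu>) *v (v::real^('n::finite+'n))) = - (H *v lo v)"
  by (simp add: up_blk neg_mv)
lemma lo_QT: "lo (blk 0 (- H) (mat 1) (mat \<nu>) *v (v::real^('n::finite+'n))) = up v + \<nu> *\<^sub>R lo v"
  by (simp add: lo_blk mat_mult_real)

lemma P_sym: "transpose H = H \<Longrightarrow> transpose (Pm \<nu> c H) = Pm \<nu> c H"
  by (simp add: Pm_def transpose_blk transpose_add')

lemma Mv_eq:
  fixes H :: "real^'n^'n" and \<nu> c :: real
  assumes sym: "transpose H = H"
  shows "(blk 0 (mat 1) (- H) (mat \<nu>) ** Pm \<nu> c H + Pm \<nu> c H ** transpose (blk 0 (mat 1) (- H) (mat \<nu>))) *v v
     = blk 0 (mat 1) (- H) (mat \<nu>) *v (Pm \<nu> c H *v v) + Pm \<nu> c H *v (blk 0 (- H) (mat 1) (mat \<nu>) *v v)"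
  by (simp add: matrix_vector_mult_add_rdistrib matrix_vector_mul_assoc Q_T[OF sym])

lemma Mv:
  fixes H :: "real^'n^'n" and \<nu> c :: real
  assumes sym: "transpose H = H"
  shows "up ((blk 0 (mat 1) (- H) (mat \<nu>) ** Pm \<nu> c H + Pm \<nu> c H ** transpose (blk 0 (mat 1) (- H) (mat \<nu>))) *v v) = \<nu> *\<^sub>R up v + (c + \<nu>^2/2) *\<^sub>R lo v"
    and "lo ((blk 0 (mat 1) (- H) (mat \<nu>) ** Pm \<nu> c H + Pm \<nu> c H ** transpose (blk 0 (mat 1) (- H) (mat \<nu>))) *v v) = \<nu> *\<^sub>R (H *v lo v) + (\<nu>^2/2 + c) *\<^sub>R up v + (2*\<nu>*c) *\<^sub>R lo v"
  unfolding Mv_eq[OF sym]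
  by (simp_all add: up_Q lo_Q up_P lo_P up_QT lo_QT matrix_vector_right_distrib matrix_vector_mult_scaleR neg_mv
        vec_eq_iff field_simps power2_eq_square)

lemma quad_P:
  "(v::real^('n::finite+'n)) \<bullet> (Pm \<nu> c H *v v) = up v \<bullet> up v + \<nu> * (up v \<bullet> lo v) + lo v \<bullet> (H *v lo v) + c * (lo v \<bullet> lo v)"
  by (simp add: inner_blocks up_P lo_P inner_add_right inner_commute algebra_simps)

lemma quad_M:
  fixes H :: "real^'n^'n" and \<nu> c :: real
  assumes sym: "transpose H = H"
  shows "v \<bullet> ((blk 0 (mat 1) (- H) (mat \<nu>) ** Pm \<nu> c H + Pm \<nu> c H ** transpose (blk 0 (mat 1) (- H) (mat \<nu>))) *v v)
    = \<nu> * (up v \<bullet> up v) + (2 * c + \<nu>^2) * (up v \<bullet> lo v) + \<nu> * (lo v \<bullet> (H *v lo v)) + 2 * \<nu> * c * (lo v \<bullet> lo v)"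
  unfolding inner_blocks[of v] Mv[OF sym] by (simp add: inner_add_right inner_commute algebra_simps power2_eq_square)

lemma P_pd:
  fixes H :: "real^'n^'n"
  assumes q: "\<forall>w. \<alpha> * (w \<bullet> w) \<le> w \<bullet> (H *v w)" and k: "\<alpha> + c > \<nu>^2/4"
  shows "pos_def (Pm \<nu> c H)"
  unfolding pos_def_def
proof (intro allI impI)
  fix v :: "real^('n+'n)" assume v: "v \<noteq> 0"
  define u where "u = up v"
  define w where "w = lo v"
  have e: "v \<bullet> (Pm \<nu> c H *v v) = u \<bullet> u + \<nu> * (u \<bullet> w) + w \<bullet> (H *v w) + c * (w \<bullet> w)"
    by (simp add: quad_P u_def w_def)
  have N: "0 \<le> (u + (\<nu>/2) *\<^sub>R w) \<bullet> (u + (\<nu>/2) *\<^sub>R w)" by simp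
  have N': "(u + (\<nu>/2) *\<^sub>R w) \<bullet> (u + (\<nu>/2) *\<^sub>R w) = u \<bullet> u + \<nu> * (u \<bullet> w) + \<nu>^2/4 * (w \<bullet> w)"
    by (simp add: inner_add_left inner_add_right inner_commute power2_eq_square algebra_simps)
  have qw: "\<alpha> * (w \<bullet> w) \<le> w \<bullet> (H *v w)" using q by blast
  show "0 < v \<bullet> (Pm \<nu> c H *v v)"
  proof (cases "w = 0")
    case True
    then have "u \<noteq> 0" using v vec_eq_blocks[of v 0] u_def w_def by auto
    then show ?thesis using e True by simp
  next
    case False
    then have "w \<bullet> w > 0" by simp
    then have "0 < (\<alpha> + c - \<nu>^2/4) * (w \<bullet> w)" using k by simp
    then show ?thesis using e N N' qw by (simp add: algebra_simps)
  qed
qed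

lemma P_eq_a:
  fixes H :: "real^'n^'n"
  assumes sym: "transpose H = H"
  shows "blk 0 (mat 1) (- H) (mat \<nu>) ** Pm \<nu> 0 H + Pm \<nu> 0 H ** transpose (blk 0 (mat 1) (- H) (mat \<nu>)) = \<nu> *\<^sub>R Pm \<nu> 0 H"
  unfolding matrix_eq
proof
  fix v
  show "(blk 0 (mat 1) (- H) (mat \<nu>) ** Pm \<nu> 0 H + Pm \<nu> 0 H ** transpose (blk 0 (mat 1) (- H) (mat \<nu>))) *v v = (\<nu> *\<^sub>R Pm \<nu> 0 H) *v v"
    unfolding vec_eq_blocks
    by (simp add: Mv[OF sym] scaleR_matrix_vector_assoc[symmetric] up_P lo_P vec_eq_iff field_simps power2_eq_square)
qed

lemma loewner_bc:
  fixes H :: "real^'n^'n"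
  assumes sym: "transpose H = H" and s: "0 < s" and q: "\<forall>w. ((\<nu>^2 - s^2)/4) * (w \<bullet> w) \<le> w \<bullet> (H *v w)"
  shows "loewner_ge (blk 0 (mat 1) (- H) (mat \<nu>) ** Pm \<nu> (s^2/2) H + Pm \<nu> (s^2/2) H ** transpose (blk 0 (mat 1) (- H) (mat \<nu>)))
           ((\<nu> - s) *\<^sub>R Pm \<nu> (s^2/2) H)"
  unfolding loewner_ge_def
proof
  fix v :: "real^('n+'n)"
  define u where "u = up v"
  define w where "w = lo v"
  define t where "t = (s + \<nu>) / 2"
  have N: "0 \<le> (u + t *\<^sub>R w) \<bullet> (u + t *\<^sub>R w)" by simp
  have N': "(u + t *\<^sub>R w) \<bullet> (u + t *\<^sub>R w) = u \<bullet> u + 2 * t * (u \<bullet> w) + t^2 * (w \<bullet> w)"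
    by (simp add: inner_add_left inner_add_right inner_commute power2_eq_square algebra_simps)
  have qw: "((\<nu>^2 - s^2)/4) * (w \<bullet> w) \<le> w \<bullet> (H *v w)" using q by blast
  have qs: "0 \<le> s * (w \<bullet> (H *v w) - ((\<nu>^2 - s^2)/4) * (w \<bullet> w))" using qw s by simp
  have "v \<bullet> (((blk 0 (mat 1) (- H) (mat \<nu>) ** Pm \<nu> (s^2/2) H + Pm \<nu> (s^2/2) H ** transpose (blk 0 (mat 1) (- H) (mat \<nu>)))
           - (\<nu> - s) *\<^sub>R Pm \<nu> (s^2/2) H) *v v)
     = \<nu> * (u \<bullet> u) + (s^2 + \<nu>^2) * (u \<bullet> w) + \<nu> * (w \<bullet> (H *v w)) + \<nu> * s^2 * (w \<bullet> w)
       - (\<nu> - s) * (u \<bullet> u + \<nu> * (u \<bullet> w) + w \<bullet> (H *v w) + s^2/2 * (w \<bullet> w))"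
    by (simp add: matrix_vector_mult_diff_rdistrib scaleR_matrix_vector_assoc[symmetric] inner_diff_right
        quad_M[OF sym] quad_P u_def w_def)
  also have "\<dots> = s * (u \<bullet> u + 2 * t * (u \<bullet> w) + t^2 * (w \<bullet> w)) + s * (w \<bullet> (H *v w) - ((\<nu>^2 - s^2)/4) * (w \<bullet> w))"
    by (simp add: t_def power2_eq_square field_simps)
  also have "\<dots> \<ge> 0" using N N' qs s by simp
  finally show "0 \<le> v \<bullet> (((blk 0 (mat 1) (- H) (mat \<nu>) ** Pm \<nu> (s^2/2) H + Pm \<nu> (s^2/2) H ** transpose (blk 0 (mat 1) (- H) (mat \<nu>)))
           - (\<nu> - s) *\<^sub>R Pm \<nu> (s^2/2) H) *v v)" .
qed

lemma alpha_props:
  assumes "smooth V"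
  shows "real_eigenvalue (hessian V x) (alpha V x)"
    and "\<forall>w. alpha V x * (w \<bullet> w) \<le> w \<bullet> (hessian V x *v w)"
  using min_eig[OF hess_sym[OF assms, of x]] unfolding alpha_def by auto

lemma EIG:
  assumes "smooth V" "eigenvalue (Qmat \<nu> V x) \<beta>"
  shows "\<exists>l. alpha V x \<le> l \<and> \<beta> * \<beta> - complex_of_real \<nu> * \<beta> + complex_of_real l = 0"
proof -
  obtain u where u: "u \<noteq> 0" "cm (hessian V x) *v u = (complex_of_real \<nu> * \<beta> - \<beta> * \<beta>) *s u"
    using Q_eig[of "hessian V x" \<nu> \<beta>] assms(2) unfolding Qmat_blk by blast
  have c: "Im (complex_of_real \<nu> * \<beta> - \<beta> * \<beta>) = 0 \<and> alpha V x \<le> Re (complex_of_real \<nu> * \<beta> - \<beta> * \<beta>)"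
    using cplx_eig[OF hess_sym[OF assms(1)] alpha_props(2)[OF assms(1)] u] .
  define l where "l = Re (complex_of_real \<nu> * \<beta> - \<beta> * \<beta>)"
  have "complex_of_real l = complex_of_real \<nu> * \<beta> - \<beta> * \<beta>"
    using c unfolding l_def by (simp add: complex_eq_iff)
  then have "\<beta> * \<beta> - complex_of_real \<nu> * \<beta> + complex_of_real l = 0" by simp
  then show ?thesis using c l_def by blast
qed

lemma BACK:
  assumes "real_eigenvalue (hessian V x) l" "\<beta> * \<beta> - complex_of_real \<nu> * \<beta> + complex_of_real l = 0"
  shows "eigenvalue (Qmat \<nu> V x) \<beta>"
proof -
  obtain u where "u \<noteq> 0" "hessian V x *v u = l *\<^sub>R u" using assms(1) unfolding real_eigenvalue_def by blast
  then show ?thesis unfolding Qmat_blk using Q_eig_back assms(2) by blast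
qed

lemma root_cases:
  assumes "\<beta> * \<beta> - complex_of_real \<nu> * \<beta> + complex_of_real l = 0"
  shows "(Im \<beta> = 0 \<and> (Re \<beta>)^2 - \<nu> * Re \<beta> + l = 0) \<or> Re \<beta> = \<nu> / 2"
proof -
  have re: "Re \<beta> * Re \<beta> - Im \<beta> * Im \<beta> - \<nu> * Re \<beta> + l = 0"
    using arg_cong[OF assms, of Re] by simp
  have im: "Im \<beta> * (2 * Re \<beta> - \<nu>) = 0"
    using arg_cong[OF assms, of Im] by (simp add: algebra_simps)
  show ?thesis
  proof (cases "Im \<beta> = 0")
    case True then show ?thesis using re by (simp add: power2_eq_square)
  next
    case False then show ?thesis using im by simp
  qed
qed

lemma root_real:
  assumes "l \<le> \<nu>^2/4"
  shows "complex_of_real ((\<nu> - sqrt (\<nu>^2 - 4*l))/2) * complex_of_real ((\<nu> - sqrt (\<nu>^2 - 4*l))/2)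
     - complex_of_real \<nu> * complex_of_real ((\<nu> - sqrt (\<nu>^2 - 4*l))/2) + complex_of_real l = 0"
proof -
  define r where "r = sqrt (\<nu>^2 - 4*l)"
  have r2: "r^2 = \<nu>^2 - 4*l" unfolding r_def using assms by simp
  have "((\<nu> - r)/2) * ((\<nu> - r)/2) - \<nu> * ((\<nu> - r)/2) + l = 0"
    using r2 by (simp add: field_simps power2_eq_square)
  then have "complex_of_real (((\<nu> - r)/2) * ((\<nu> - r)/2) - \<nu> * ((\<nu> - r)/2) + l) = 0" by simp
  then show ?thesis unfolding r_def[symmetric] by simp
qed

lemma root_cplx:
  assumes "\<nu>^2/4 \<le> l"
  shows "Complex (\<nu>/2) (sqrt (4*l - \<nu>^2)/2) * Complex (\<nu>/2) (sqrt (4*l - \<nu>^2)/2)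
     - complex_of_real \<nu> * Complex (\<nu>/2) (sqrt (4*l - \<nu>^2)/2) + complex_of_real l = 0"
proof -
  define r where "r = sqrt (4*l - \<nu>^2)"
  have r2: "r * r = 4*l - \<nu>^2" unfolding r_def using assms by simp
  show ?thesis unfolding r_def[symmetric] using r2
    by (simp add: complex_eq_iff field_simps power2_eq_square)
qed

lemma part1:
  assumes sm: "smooth V" and nu: "\<nu> > 0"
  shows "positive_stable (Qmat \<nu> V x) \<longleftrightarrow> pos_def (hessian V x)"
proof
  assume ps: "positive_stable (Qmat \<nu> V x)"
  show "pos_def (hessian V x)"
  proof (rule ccontr)
    assume np: "\<not> pos_def (hessian V x)"
    have al: "alpha V x \<le> 0"
    proof (rule ccontr)
      assume "\<not> alpha V x \<le> 0"
      then have ap: "alpha V x > 0" by simp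
      have "pos_def (hessian V x)" unfolding pos_def_def
      proof (intro allI impI)
        fix v :: "real^'a" assume "v \<noteq> 0"
        then have "v \<bullet> v > 0" by simp
        then have "0 < alpha V x * (v \<bullet> v)" using ap by simp
        also have "\<dots> \<le> v \<bullet> (hessian V x *v v)" using alpha_props(2)[OF sm] by blast
        finally show "0 < v \<bullet> (hessian V x *v v)" .
      qed
      with np show False by blast
    qed
    define b where "b = (\<nu> - sqrt (\<nu>^2 - 4 * alpha V x)) / 2"
    have le: "alpha V x \<le> \<nu>^2/4" using al zero_le_power2[of \<nu>] by linarith
    have "eigenvalue (Qmat \<nu> V x) (complex_of_real b)"
      unfolding b_def using BACK[OF alpha_props(1)[OF sm] root_real[OF le]] .
    then have "Re (complex_of_real b) > 0" using ps unfolding positive_stable_def by blast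
    moreover have "sqrt (\<nu>^2) \<le> sqrt (\<nu>^2 - 4 * alpha V x)" using al by (intro real_sqrt_le_mono) linarith
    then have "\<nu> \<le> sqrt (\<nu>^2 - 4 * alpha V x)" using nu by simp
    then have "b \<le> 0" unfolding b_def by simp
    ultimately show False by simp
  qed
next
  assume pd: "pos_def (hessian V x)"
  obtain v where v: "v \<noteq> 0" "hessian V x *v v = alpha V x *\<^sub>R v"
    using alpha_props(1)[OF sm] unfolding real_eigenvalue_def by blast
  have "0 < v \<bullet> (hessian V x *v v)" using pd v unfolding pos_def_def by blast
  then have "0 < alpha V x * (v \<bullet> v)" using v by simp
  moreover have "v \<bullet> v > 0" using v by simp
  ultimately have ap: "alpha V x > 0" by (simp add: zero_less_mult_iff)
  show "positive_stable (Qmat \<nu> V x)" unfolding positive_stable_def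
  proof (intro allI impI)
    fix \<beta> assume "eigenvalue (Qmat \<nu> V x) \<beta>"
    then obtain l where l: "alpha V x \<le> l" "\<beta> * \<beta> - complex_of_real \<nu> * \<beta> + complex_of_real l = 0"
      using EIG[OF sm] by blast
    show "Re \<beta> > 0"
      using root_cases[OF l(2)]
    proof
      assume "Im \<beta> = 0 \<and> (Re \<beta>)^2 - \<nu> * Re \<beta> + l = 0"
      then have e: "(Re \<beta>)^2 - \<nu> * Re \<beta> + l = 0" by simp
      show "Re \<beta> > 0"
      proof (rule ccontr)
        assume "\<not> Re \<beta> > 0"
        then have "(Re \<beta>)^2 - \<nu> * Re \<beta> \<ge> 0" using nu
          by (simp add: power2_eq_square mult_nonpos_nonpos mult_nonneg_nonpos algebra_simps)
             (metis diff_ge_0_iff_ge le_cases mult_le_cancel_right not_less order_trans mult_nonneg_nonpos)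
        then show False using e ap l(1) by linarith
      qed
    next
      assume "Re \<beta> = \<nu> / 2" then show ?thesis using nu by simp
    qed
  qed
qed

lemma mu_half:
  assumes sm: "smooth V" and nu: "\<nu> > 0" and al: "\<forall>x. \<nu>^2/4 \<le> alpha V x"
  shows "mu \<nu> V = ereal (\<nu>/2)"
proof -
  have re: "Re \<beta> = \<nu>/2" if ev: "eigenvalue (Qmat \<nu> V x) \<beta>" for x \<beta>
  proof -
    obtain l where l: "alpha V x \<le> l" "\<beta> * \<beta> - complex_of_real \<nu> * \<beta> + complex_of_real l = 0"
      using EIG[OF sm ev] by blast
    have lx: "\<nu>^2/4 \<le> l" using al l(1) by (meson order_trans)
    show ?thesis using root_cases[OF l(2)]
    proof
      assume "Im \<beta> = 0 \<and> (Re \<beta>)^2 - \<nu> * Re \<beta> + l = 0"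
      then have "(Re \<beta> - \<nu>/2)^2 = \<nu>^2/4 - l" by (simp add: power2_eq_square algebra_simps)
      then have "(Re \<beta> - \<nu>/2)^2 \<le> 0" using lx by simp
      then show ?thesis by simp
    qed
  qed
  define x0 :: "real^'a" where "x0 = undefined"
  define b0 where "b0 = Complex (\<nu>/2) (sqrt (4 * alpha V x0 - \<nu>^2)/2)"
  have b0: "eigenvalue (Qmat \<nu> V x0) b0"
    unfolding b0_def using BACK[OF alpha_props(1)[OF sm] root_cplx[OF al[rule_format, of x0]]] .
  show ?thesis
  proof (rule antisym)
    show "mu \<nu> V \<le> ereal (\<nu>/2)"
      unfolding mu_def
      by (rule INF_lower2[of x0]) (auto intro!: INF_lower2[of b0] simp: b0 re[OF b0])
    show "ereal (\<nu>/2) \<le> mu \<nu> V"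
      unfolding mu_def by (auto intro!: INF_greatest simp: re)
  qed
qed

lemma mu_b:
  assumes sm: "smooth V" and nu: "\<nu> > 0" and a0: "alpha0 V = ereal a0" "0 < a0" "a0 < \<nu>^2/4"
  shows "mu \<nu> V = ereal ((\<nu> - sqrt (\<nu>^2 - 4 * a0)) / 2)"
proof -
  define s where "s = sqrt (\<nu>^2 - 4 * a0)"
  have s2: "s^2 = \<nu>^2 - 4 * a0" unfolding s_def using a0 by simp
  have s0: "s > 0" unfolding s_def using a0 by simp
  have al: "a0 \<le> alpha V x" for x
  proof -
    have "alpha0 V \<le> ereal (alpha V x)" unfolding alpha0_def by (rule INF_lower) simp
    then show ?thesis using a0 by simp
  qed
  have lower: "(\<nu> - s)/2 \<le> Re \<beta>" if ev: "eigenvalue (Qmat \<nu> V x) \<beta>" for x \<beta>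
  proof -
    obtain l where l: "alpha V x \<le> l" "\<beta> * \<beta> - complex_of_real \<nu> * \<beta> + complex_of_real l = 0"
      using EIG[OF sm ev] by blast
    have lx: "a0 \<le> l" using al[of x] l(1) by linarith
    show ?thesis using root_cases[OF l(2)]
    proof
      assume "Im \<beta> = 0 \<and> (Re \<beta>)^2 - \<nu> * Re \<beta> + l = 0"
      then have "(\<nu>/2 - Re \<beta>)^2 = \<nu>^2/4 - l" by (simp add: power2_eq_square algebra_simps)
      then have h: "(\<nu>/2 - Re \<beta>)^2 \<le> (s/2)^2" using lx s2 by (simp add: power_divide)
      show ?thesis
      proof (rule ccontr)
        assume "\<not> ?thesis"
        then have "s/2 < \<nu>/2 - Re \<beta>" by simp
        then have "(s/2)^2 < (\<nu>/2 - Re \<beta>)^2" using s0 by (intro power_strict_mono) auto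
        with h show False by simp
      qed
    next
      assume "Re \<beta> = \<nu> / 2" then show ?thesis using s0 by simp
    qed
  qed
  show ?thesis unfolding s_def[symmetric]
  proof (rule antisym)
    show "ereal ((\<nu> - s)/2) \<le> mu \<nu> V"
    proof -
      have lower': "ereal ((\<nu> - s)/2) \<le> ereal (Re \<beta>)" if "eigenvalue (Qmat \<nu> V x) \<beta>" for x \<beta>
        using lower[OF that] by simp
      show ?thesis unfolding mu_def by (intro INF_greatest) (rule lower', simp)
    qed
    show "mu \<nu> V \<le> ereal ((\<nu> - s)/2)"
    proof (rule ereal_le_epsilon2)
      fix e :: real assume e: "0 < e"
      define e' where "e' = min e (s/4)"
      have e': "0 < e'" "e' \<le> e" "e' \<le> s/4" using e s0 by (auto simp: e'_def)
      define T where "T = (\<nu>^2 - (s - 2*e')^2)/4"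
      have "(s - 2*e')^2 < s^2" using e' s0 by (intro power_strict_mono[of "s - 2*e'" s]) auto
      then have "a0 < T" using s2 unfolding T_def by simp
      then have "alpha0 V < ereal T" using a0 by simp
      then obtain x' where x': "ereal (alpha V x') < ereal T" unfolding alpha0_def INF_less_iff by blast
      define l where "l = alpha V x'"
      have lT: "l < T" using x' l_def by simp
      have "T \<le> \<nu>^2/4" unfolding T_def using zero_le_power2[of "s-2*e'"] by (intro divide_right_mono) auto
      then have lnu: "l \<le> \<nu>^2/4" using lT by linarith
      define b where "b = (\<nu> - sqrt (\<nu>^2 - 4*l))/2"
      have eb: "eigenvalue (Qmat \<nu> V x') (complex_of_real b)"
        unfolding b_def using BACK[OF alpha_props(1)[OF sm, of x', folded l_def] root_real[OF lnu]] .
      have "s - 2*e' < sqrt (\<nu>^2 - 4*l)"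
        by (rule real_less_rsqrt) (use lT in \<open>simp add: T_def\<close>)
      then have "b < (\<nu> - s)/2 + e'" unfolding b_def diff_divide_distrib by linarith
      then have "b \<le> (\<nu> - s)/2 + e" using e' by simp
      have "mu \<nu> V \<le> ereal b"
        unfolding mu_def by (rule INF_lower2[of x']) (auto intro!: INF_lower2[of "complex_of_real b"] simp: eb)
      also have "\<dots> \<le> ereal ((\<nu> - s)/2) + ereal e" using \<open>b \<le> (\<nu> - s)/2 + e\<close> by simp
      finally show "mu \<nu> V \<le> ereal ((\<nu> - s)/2) + ereal e" .
    qed
  qed
qed

theorem lemma4p4:
  fixes V :: "real^'n::finite \<Rightarrow> real" and \<nu> :: real
  assumes nu_pos: "\<nu> > 0"
    and smooth: "smooth V"
  shows "(\<forall>x. positive_stable (Qmat \<nu> V x) \<longleftrightarrow> pos_def (hessian V x))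
    \<and> (\<forall>x. pos_def (hessian V x) \<longrightarrow>
        (alpha0 V > ereal (\<nu>\<^sup>2 / 4) \<longrightarrow>
            mu \<nu> V = ereal (\<nu> / 2)
          \<and> (\<exists>P. sym_pos_def P \<and>
               Qmat \<nu> V x ** P + P ** transpose (Qmat \<nu> V x) = (2 * real_of_ereal (mu \<nu> V)) *\<^sub>R P))
      \<and> (0 < alpha0 V \<and> alpha0 V < ereal (\<nu>\<^sup>2 / 4) \<longrightarrow>
            mu \<nu> V = ereal ((\<nu> - sqrt (\<nu>\<^sup>2 - 4 * real_of_ereal (alpha0 V))) / 2)
          \<and> (\<exists>P. sym_pos_def P \<and>
               loewner_ge (Qmat \<nu> V x ** P + P ** transpose (Qmat \<nu> V x))
                 ((2 * real_of_ereal (mu \<nu> V)) *\<^sub>R P)))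
      \<and> (alpha0 V = ereal (\<nu>\<^sup>2 / 4) \<longrightarrow>
            mu \<nu> V = ereal (\<nu> / 2)
          \<and> (\<forall>\<epsilon>. 0 < \<epsilon> \<and> \<epsilon> < \<nu> \<longrightarrow>
               (\<exists>P. sym_pos_def P \<and>
                  loewner_ge (Qmat \<nu> V x ** P + P ** transpose (Qmat \<nu> V x))
                    ((2 * real_of_ereal (mu \<nu> V) - \<epsilon>) *\<^sub>R P)))))"
proof -
  have sym: "\<And>x. transpose (hessian V x) = hessian V x" using hess_sym[OF smooth] .
  have alb: "\<And>x. alpha0 V \<le> ereal (alpha V x)" unfolding alpha0_def by (rule INF_lower) simp
  have weaken: "\<forall>w. a * (w \<bullet> w) \<le> w \<bullet> (hessian V x *v w)" if "a \<le> alpha V x" for a x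
  proof
    fix w :: "real^'n"
    have "a * (w \<bullet> w) \<le> alpha V x * (w \<bullet> w)" using that by (intro mult_right_mono) auto
    also have "\<dots> \<le> w \<bullet> (hessian V x *v w)" using alpha_props(2)[OF smooth] by blast
    finally show "a * (w \<bullet> w) \<le> w \<bullet> (hessian V x *v w)" .
  qed
  have p1: "\<forall>x. positive_stable (Qmat \<nu> V x) \<longleftrightarrow> pos_def (hessian V x)"
    using part1[OF smooth nu_pos] by blast
  have A: "alpha0 V > ereal (\<nu>\<^sup>2 / 4) \<longrightarrow>
            mu \<nu> V = ereal (\<nu> / 2)
          \<and> (\<exists>P. sym_pos_def P \<and>
               Qmat \<nu> V x ** P + P ** transpose (Qmat \<nu> V x) = (2 * real_of_ereal (mu \<nu> V)) *\<^sub>R P)" for x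
  proof
    assume ha: "alpha0 V > ereal (\<nu>\<^sup>2 / 4)"
    have al: "\<nu>^2/4 < alpha V x'" for x'
    proof -
      have "ereal (\<nu>^2/4) < ereal (alpha V x')" by (rule less_le_trans[OF ha alb])
      then show ?thesis by simp
    qed
    have al': "\<forall>x'. \<nu>^2/4 \<le> alpha V x'" using al less_imp_le by blast
    have mu: "mu \<nu> V = ereal (\<nu>/2)" by (rule mu_half[OF smooth nu_pos al'])
    have k: "alpha V x + 0 > \<nu>^2/4" using al[of x] by simp
    have s1: "sym_pos_def (Pm \<nu> 0 (hessian V x))"
      unfolding sym_pos_def_def using P_sym[OF sym] P_pd[OF weaken[OF order_refl] k] by blast
    have s2: "Qmat \<nu> V x ** Pm \<nu> 0 (hessian V x) + Pm \<nu> 0 (hessian V x) ** transpose (Qmat \<nu> V x)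
        = (2 * real_of_ereal (mu \<nu> V)) *\<^sub>R Pm \<nu> 0 (hessian V x)"
    proof -
      have "2 * real_of_ereal (mu \<nu> V) = \<nu>" unfolding mu by simp
      then show ?thesis unfolding Qmat_blk using P_eq_a[OF sym] by metis
    qed
    have ex: "\<exists>P. sym_pos_def P \<and>
               Qmat \<nu> V x ** P + P ** transpose (Qmat \<nu> V x) = (2 * real_of_ereal (mu \<nu> V)) *\<^sub>R P"
      by (intro exI[of _ "Pm \<nu> 0 (hessian V x)"] conjI s1 s2)
    show "mu \<nu> V = ereal (\<nu> / 2) \<and> (\<exists>P. sym_pos_def P \<and>
               Qmat \<nu> V x ** P + P ** transpose (Qmat \<nu> V x) = (2 * real_of_ereal (mu \<nu> V)) *\<^sub>R P)"
      using mu ex by (intro conjI)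
  qed
  have B: "0 < alpha0 V \<and> alpha0 V < ereal (\<nu>\<^sup>2 / 4) \<longrightarrow>
            mu \<nu> V = ereal ((\<nu> - sqrt (\<nu>\<^sup>2 - 4 * real_of_ereal (alpha0 V))) / 2)
          \<and> (\<exists>P. sym_pos_def P \<and>
               loewner_ge (Qmat \<nu> V x ** P + P ** transpose (Qmat \<nu> V x))
                 ((2 * real_of_ereal (mu \<nu> V)) *\<^sub>R P))" for x
  proof
    assume hb: "0 < alpha0 V \<and> alpha0 V < ereal (\<nu>\<^sup>2 / 4)"
    obtain a0 where a0: "alpha0 V = ereal a0" using hb by (cases "alpha0 V") auto
    have a0b: "0 < a0" "a0 < \<nu>^2/4" using hb unfolding a0 by auto
    define s where "s = sqrt (\<nu>^2 - 4 * a0)"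
    have s2: "s^2 = \<nu>^2 - 4 * a0" unfolding s_def using a0b by simp
    have s0: "s > 0" unfolding s_def using a0b by simp
    have mu: "mu \<nu> V = ereal ((\<nu> - s) / 2)" unfolding s_def by (rule mu_b[OF smooth nu_pos a0 a0b])
    have ax: "a0 \<le> alpha V x" using alb[of x] unfolding a0 by simp
    have qa: "\<forall>w. a0 * (w \<bullet> w) \<le> w \<bullet> (hessian V x *v w)" by (rule weaken[OF ax])
    have k: "a0 + s^2/2 > \<nu>^2/4" unfolding s2 using a0b(2) by (simp add: field_simps)
    have s1: "sym_pos_def (Pm \<nu> (s^2/2) (hessian V x))"
      unfolding sym_pos_def_def using P_sym[OF sym] P_pd[OF qa k] by blast
    have e: "(\<nu>^2 - s^2)/4 = a0" using s2 by simp
    have qa': "\<forall>w. ((\<nu>^2 - s^2)/4) * (w \<bullet> w) \<le> w \<bullet> (hessian V x *v w)" unfolding e by (rule qa)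
    have L: "loewner_ge (blk 0 (mat 1) (- hessian V x) (mat \<nu>) ** Pm \<nu> (s^2/2) (hessian V x) + Pm \<nu> (s^2/2) (hessian V x) ** transpose (blk 0 (mat 1) (- hessian V x) (mat \<nu>)))
           ((\<nu> - s) *\<^sub>R Pm \<nu> (s^2/2) (hessian V x))" by (rule loewner_bc[OF sym s0 qa'])
    have m2: "2 * real_of_ereal (mu \<nu> V) = \<nu> - s" unfolding mu by simp
    have s3: "loewner_ge (Qmat \<nu> V x ** Pm \<nu> (s^2/2) (hessian V x) + Pm \<nu> (s^2/2) (hessian V x) ** transpose (Qmat \<nu> V x))
                 ((2 * real_of_ereal (mu \<nu> V)) *\<^sub>R Pm \<nu> (s^2/2) (hessian V x))"
      unfolding Qmat_blk m2 by (rule L)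
    have ex: "\<exists>P. sym_pos_def P \<and>
               loewner_ge (Qmat \<nu> V x ** P + P ** transpose (Qmat \<nu> V x))
                 ((2 * real_of_ereal (mu \<nu> V)) *\<^sub>R P)"
      by (intro exI[of _ "Pm \<nu> (s^2/2) (hessian V x)"] conjI s1 s3)
    have ra: "real_of_ereal (alpha0 V) = a0" unfolding a0 by simp
    have m: "mu \<nu> V = ereal ((\<nu> - sqrt (\<nu>\<^sup>2 - 4 * real_of_ereal (alpha0 V))) / 2)"
      unfolding ra using mu unfolding s_def .
    show "mu \<nu> V = ereal ((\<nu> - sqrt (\<nu>\<^sup>2 - 4 * real_of_ereal (alpha0 V))) / 2)
          \<and> (\<exists>P. sym_pos_def P \<and>
               loewner_ge (Qmat \<nu> V x ** P + P ** transpose (Qmat \<nu> V x))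
                 ((2 * real_of_ereal (mu \<nu> V)) *\<^sub>R P))" using m ex by (intro conjI)
  qed
  have C: "alpha0 V = ereal (\<nu>\<^sup>2 / 4) \<longrightarrow>
            mu \<nu> V = ereal (\<nu> / 2)
          \<and> (\<forall>\<epsilon>. 0 < \<epsilon> \<and> \<epsilon> < \<nu> \<longrightarrow>
               (\<exists>P. sym_pos_def P \<and>
                  loewner_ge (Qmat \<nu> V x ** P + P ** transpose (Qmat \<nu> V x))
                    ((2 * real_of_ereal (mu \<nu> V) - \<epsilon>) *\<^sub>R P)))" for x
  proof
    assume hc: "alpha0 V = ereal (\<nu>\<^sup>2 / 4)"
    have al: "\<nu>^2/4 \<le> alpha V x'" for x' using alb[of x'] unfolding hc by simp
    have al': "\<forall>x'. \<nu>^2/4 \<le> alpha V x'" using al by blast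
    have mu: "mu \<nu> V = ereal (\<nu>/2)" by (rule mu_half[OF smooth nu_pos al'])
    have ex: "\<exists>P. sym_pos_def P \<and>
                  loewner_ge (Qmat \<nu> V x ** P + P ** transpose (Qmat \<nu> V x))
                    ((2 * real_of_ereal (mu \<nu> V) - \<epsilon>) *\<^sub>R P)" if eps: "0 < \<epsilon> \<and> \<epsilon> < \<nu>" for \<epsilon>
    proof -
      have e0: "\<epsilon> > 0" using eps by simp
      have "(\<nu>^2 - \<epsilon>^2)/4 \<le> \<nu>^2/4" by (intro divide_right_mono) auto
      then have ax: "(\<nu>^2 - \<epsilon>^2)/4 \<le> alpha V x" using al[of x] by linarith
      have qa: "\<forall>w. ((\<nu>^2 - \<epsilon>^2)/4) * (w \<bullet> w) \<le> w \<bullet> (hessian V x *v w)" by (rule weaken[OF ax])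
      have k: "(\<nu>^2 - \<epsilon>^2)/4 + \<epsilon>^2/2 > \<nu>^2/4"
      proof -
        have "(\<nu>^2 - \<epsilon>^2)/4 + \<epsilon>^2/2 = \<nu>^2/4 + \<epsilon>^2/4" by (simp add: field_simps)
        moreover have "\<epsilon>^2 > 0" using e0 by simp
        ultimately show ?thesis by linarith
      qed
      have s1: "sym_pos_def (Pm \<nu> (\<epsilon>^2/2) (hessian V x))"
        unfolding sym_pos_def_def using P_sym[OF sym] P_pd[OF qa k] by blast
      have L: "loewner_ge (blk 0 (mat 1) (- hessian V x) (mat \<nu>) ** Pm \<nu> (\<epsilon>^2/2) (hessian V x) + Pm \<nu> (\<epsilon>^2/2) (hessian V x) ** transpose (blk 0 (mat 1) (- hessian V x) (mat \<nu>)))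
           ((\<nu> - \<epsilon>) *\<^sub>R Pm \<nu> (\<epsilon>^2/2) (hessian V x))" by (rule loewner_bc[OF sym e0 qa])
      have m2: "2 * real_of_ereal (mu \<nu> V) - \<epsilon> = \<nu> - \<epsilon>" unfolding mu by simp
      have s3: "loewner_ge (Qmat \<nu> V x ** Pm \<nu> (\<epsilon>^2/2) (hessian V x) + Pm \<nu> (\<epsilon>^2/2) (hessian V x) ** transpose (Qmat \<nu> V x))
                    ((2 * real_of_ereal (mu \<nu> V) - \<epsilon>) *\<^sub>R Pm \<nu> (\<epsilon>^2/2) (hessian V x))"
        unfolding Qmat_blk m2 by (rule L)
      show ?thesis by (intro exI[of _ "Pm \<nu> (\<epsilon>^2/2) (hessian V x)"] conjI s1 s3)
    qed
    show "mu \<nu> V = ereal (\<nu> / 2)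
          \<and> (\<forall>\<epsilon>. 0 < \<epsilon> \<and> \<epsilon> < \<nu> \<longrightarrow>
               (\<exists>P. sym_pos_def P \<and>
                  loewner_ge (Qmat \<nu> V x ** P + P ** transpose (Qmat \<nu> V x))
                    ((2 * real_of_ereal (mu \<nu> V) - \<epsilon>) *\<^sub>R P)))"
      using mu ex by blast
  qed
  show ?thesis using p1 A B C by blast
qed

end
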